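(* Let $G=K_{m_1,\dots,m_k}$ be the complete multipartite graph with $k\ge 1$ parts of sizes $m_1,\dots,m_k\ge 1$, and let $\alpha=\max\{m_1,\dots,m_k\}$. Then $G$ is pseudo-Gorenstein$^{*}$ if and only if $k=2$ and $\alpha$ is odd.
   Context: The complete multipartite graph $K_{m_1,\dots,m_k}$ has vertex set $V_1\sqcup\dots\sqcup V_k$ with $|V_i|=m_i$, and $\{a,b\}$ is an edge iff $a\in V_i$, $b\in V_j$ with $i\ne j$. For a finite simple graph $G$ on vertex set $[N]$, let $S=K[x_1,\dots,x_N]$ ($K$ a field) and $I(G)$ the edge ideal generated by $x_ix_j$, $\{i,j\}\in E(G)$. Let $\alpha(G)$ be the independence number (equal to $\dim S/I(G)$). Write the Hilbert series of $S/I(G)$ uniquely as $(h_0+\dots+h_st^s)/(1-t)^{\alpha(G)}$ with $h_s\ne 0$, and $\mathfrak a(G)=s-\alpha(G)$. $G$ is pseudo-Gorenstein$^{*}$ if $h_s=1$ and $\mathfrak a(G)=0$. *)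

theory Defs
  imports "HOL-Computational_Algebra.Formal_Power_Series"
begin

text \<open>A finite simple graph is given by a finite vertex set V and a symmetric,
irreflexive edge relation E.  The polynomial ring S = K[x_v : v in V] has as
K-basis the monomials, encoded by exponent vectors supported on V.  The edge
ideal I(G) is a monomial ideal generated by x_u x_v for edges {u,v}; a monomial
lies in I(G) iff it is divisible by some generator.  The monomials outside I(G)
form a K-basis of S/I(G), so the Hilbert function of S/I(G) in degree d is the
number of such monomials of degree d (independent of the field K).\<close>

definition monomials_deg :: "'a set \<Rightarrow> nat \<Rightarrow> ('a \<Rightarrow> nat) set" where
  "monomials_deg V d = {a. (\<forall>x. x \<notin> V \<longrightarrow> a x = 0) \<and> (\<Sum>x\<in>V. a x) = d}"

definition in_edge_ideal :: "('a \<Rightarrow> 'a \<Rightarrow> bool) \<Rightarrow> ('a \<Rightarrow> nat) \<Rightarrow> bool" where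
  "in_edge_ideal E a \<longleftrightarrow> (\<exists>u v. E u v \<and> u \<noteq> v \<and> a u \<ge> 1 \<and> a v \<ge> 1)"

definition hilbert_fun :: "'a set \<Rightarrow> ('a \<Rightarrow> 'a \<Rightarrow> bool) \<Rightarrow> nat \<Rightarrow> nat" where
  "hilbert_fun V E d = card {a \<in> monomials_deg V d. \<not> in_edge_ideal E a}"

definition hilbert_series :: "'a set \<Rightarrow> ('a \<Rightarrow> 'a \<Rightarrow> bool) \<Rightarrow> int fps" where
  "hilbert_series V E = Abs_fps (\<lambda>d. int (hilbert_fun V E d))"

definition independent_set :: "'a set \<Rightarrow> ('a \<Rightarrow> 'a \<Rightarrow> bool) \<Rightarrow> 'a set \<Rightarrow> bool" where
  "independent_set V E S \<longleftrightarrow> S \<subseteq> V \<and> (\<forall>u\<in>S. \<forall>v\<in>S. \<not> E u v)"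

definition independence_number :: "'a set \<Rightarrow> ('a \<Rightarrow> 'a \<Rightarrow> bool) \<Rightarrow> nat" where
  "independence_number V E = Max (card ` {S. independent_set V E S})"

definition h_fps :: "'a set \<Rightarrow> ('a \<Rightarrow> 'a \<Rightarrow> bool) \<Rightarrow> int fps" where
  "h_fps V E = hilbert_series V E * (1 - fps_X) ^ independence_number V E"

definition h_degree :: "'a set \<Rightarrow> ('a \<Rightarrow> 'a \<Rightarrow> bool) \<Rightarrow> nat" where
  "h_degree V E = Max {n. fps_nth (h_fps V E) n \<noteq> 0}"

definition a_invariant :: "'a set \<Rightarrow> ('a \<Rightarrow> 'a \<Rightarrow> bool) \<Rightarrow> int" where
  "a_invariant V E = int (h_degree V E) - int (independence_number V E)"

definition pseudo_Gorenstein_star :: "'a set \<Rightarrow> ('a \<Rightarrow> 'a \<Rightarrow> bool) \<Rightarrow> bool" where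
  "pseudo_Gorenstein_star V E \<longleftrightarrow>
     finite {n. fps_nth (h_fps V E) n \<noteq> 0} \<and>
     {n. fps_nth (h_fps V E) n \<noteq> 0} \<noteq> {} \<and>
     fps_nth (h_fps V E) (h_degree V E) = 1 \<and> a_invariant V E = 0"

text \<open>Complete multipartite graph K_{m_1,...,m_k} with ms = [m_1,...,m_k]:
  vertices (i,j) with i < k, j < m_i; the part V_i is {(i,j). j < m_i}.\<close>
definition cmp_vertices :: "nat list \<Rightarrow> (nat \<times> nat) set" where
  "cmp_vertices ms = {(i, j). i < length ms \<and> j < ms ! i}"

definition cmp_edge :: "(nat \<times> nat) \<Rightarrow> (nat \<times> nat) \<Rightarrow> bool" where
  "cmp_edge p q \<longleftrightarrow> fst p \<noteq> fst q"

end

theory Submission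
  imports Defs
begin

definition part :: "nat list \<Rightarrow> nat \<Rightarrow> (nat \<times> nat) set" where
  "part ms i = Pair i ` {..<ms!i}"

definition Fset :: "nat list \<Rightarrow> nat \<Rightarrow> nat \<Rightarrow> (nat \<times> nat \<Rightarrow> nat) set" where
  "Fset ms i d = {a. (\<forall>x. x \<notin> part ms i \<longrightarrow> a x = 0) \<and> (\<Sum>x\<in>part ms i. a x) = d}"

lemma sum_part: "(\<Sum>x\<in>part ms i. a x) = (\<Sum>j<ms!i. a (i,j))"
  by (simp add: part_def sum.reindex inj_on_def)

lemma card_part: "card (part ms i) = ms!i"
  by (simp add: part_def card_image inj_on_def)

lemma finite_part: "finite (part ms i)"
  by (simp add: part_def)

lemma sum_list_upt: "sum_list (map f [0..<n]) = (\<Sum>j<n. (f j::nat))"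
  by (simp add: sum_set_upt_conv_sum_list_nat[symmetric] atLeast0LessThan)

lemma bij_F:
  "bij_betw (\<lambda>a. map (\<lambda>j. a (i,j)) [0..<ms!i]) (Fset ms i d)
     {l::nat list. size l = ms!i \<and> sum_list l = d}"
proof (rule bij_betw_byWitness[where f' = "\<lambda>l x. if fst x = i \<and> snd x < ms!i then l ! snd x else 0"])
  show "\<forall>a\<in>Fset ms i d. (\<lambda>x. if fst x = i \<and> snd x < ms!i then map (\<lambda>j. a (i,j)) [0..<ms!i] ! snd x else 0) = a"
  proof
    fix a assume a: "a \<in> Fset ms i d"
    show "(\<lambda>x. if fst x = i \<and> snd x < ms!i then map (\<lambda>j. a (i,j)) [0..<ms!i] ! snd x else 0) = a"
    proof
      fix x :: "nat \<times> nat"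
      show "(if fst x = i \<and> snd x < ms!i then map (\<lambda>j. a (i,j)) [0..<ms!i] ! snd x else 0) = a x"
      proof (cases "fst x = i \<and> snd x < ms!i")
        case True then show ?thesis by (cases x) auto
      next
        case False
        then have "x \<notin> part ms i" by (auto simp: part_def)
        then show ?thesis using a False unfolding Fset_def by (cases x) force
      qed
    qed
  qed
  show "\<forall>l\<in>{l::nat list. size l = ms!i \<and> sum_list l = d}.
     map (\<lambda>j. (\<lambda>x. if fst x = i \<and> snd x < ms!i then l ! snd x else 0) (i,j)) [0..<ms!i] = l"
    by (auto intro: nth_equalityI)
  show "(\<lambda>a. map (\<lambda>j. a (i,j)) [0..<ms!i]) ` Fset ms i d \<subseteq> {l::nat list. size l = ms!i \<and> sum_list l = d}"
    by (auto simp: Fset_def sum_list_upt sum_part)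
  show "(\<lambda>l x. if fst x = i \<and> snd x < ms!i then l ! snd x else 0) ` {l::nat list. size l = ms!i \<and> sum_list l = d} \<subseteq> Fset ms i d"
  proof
    fix a assume "a \<in> (\<lambda>l x. if fst x = i \<and> snd x < ms!i then l ! snd x else 0) ` {l::nat list. size l = ms!i \<and> sum_list l = d}"
    then obtain l where l: "size l = ms!i" "sum_list l = d" and a: "a = (\<lambda>x. if fst x = i \<and> snd x < ms!i then l ! snd x else 0)"
      by auto
    have "(\<Sum>x\<in>part ms i. a x) = (\<Sum>j<ms!i. l ! j)" unfolding sum_part a by simp
    also have "\<dots> = d" using l by (simp add: sum_list_sum_nth atLeast0LessThan)
    finally show "a \<in> Fset ms i d" unfolding Fset_def by (auto simp: a part_def)
  qed
qed

lemma finite_L: "finite {l::nat list. size l = m \<and> sum_list l = d}"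
proof (rule finite_subset)
  show "{l::nat list. size l = m \<and> sum_list l = d} \<subseteq> {xs. set xs \<subseteq> {..d} \<and> length xs = m}"
    using member_le_sum_list by fastforce
  show "finite {xs. set xs \<subseteq> {..d::nat} \<and> length xs = m}"
    by (rule finite_lists_length_eq) simp
qed

lemma card_F: "card (Fset ms i d) = (ms!i + d - 1) choose d"
  using bij_betw_same_card[OF bij_F[of i ms d]] card_length_sum_list[of "ms!i" d]
  by (simp add: add.commute)

lemma finite_F: "finite (Fset ms i d)"
  using bij_betw_finite[OF bij_F[of i ms d]] finite_L by blast

lemma V_eq: "cmp_vertices ms = (\<Union>i<length ms. part ms i)"
  by (auto simp: cmp_vertices_def part_def)

lemma finite_V: "finite (cmp_vertices ms)"
  by (simp add: V_eq finite_part)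

lemma set_pos:
  assumes "d > 0"
  shows "{a \<in> monomials_deg (cmp_vertices ms) d. \<not> in_edge_ideal cmp_edge a} = (\<Union>i<length ms. Fset ms i d)"
proof
  show "{a \<in> monomials_deg (cmp_vertices ms) d. \<not> in_edge_ideal cmp_edge a} \<subseteq> (\<Union>i<length ms. Fset ms i d)"
  proof
    fix a assume "a \<in> {a \<in> monomials_deg (cmp_vertices ms) d. \<not> in_edge_ideal cmp_edge a}"
    then have out: "\<forall>x. x \<notin> cmp_vertices ms \<longrightarrow> a x = 0" and s: "(\<Sum>x\<in>cmp_vertices ms. a x) = d"
      and ni: "\<not> in_edge_ideal cmp_edge a"
      by (auto simp: monomials_deg_def)
    have "\<exists>x\<in>cmp_vertices ms. a x \<noteq> 0"
    proof (rule ccontr)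
      assume "\<not> ?thesis"
      then have "(\<Sum>x\<in>cmp_vertices ms. a x) = 0" by simp
      with s assms show False by simp
    qed
    then obtain x where x: "x \<in> cmp_vertices ms" "a x \<noteq> 0" by blast
    let ?i = "fst x"
    have i: "?i < length ms" using x by (auto simp: cmp_vertices_def)
    have zo: "\<forall>y. y \<notin> part ms ?i \<longrightarrow> a y = 0"
    proof (intro allI impI)
      fix y assume y: "y \<notin> part ms ?i"
      show "a y = 0"
      proof (cases "y \<in> cmp_vertices ms")
        case False then show ?thesis using out by blast
      next
        case True
        then have "fst y \<noteq> ?i" using y by (cases y) (auto simp: cmp_vertices_def part_def)
        then show ?thesis using ni x unfolding in_edge_ideal_def cmp_edge_def
          by (metis One_nat_def Suc_leI neq0_conv prod.inject)
      qed
    qed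
    have sub: "part ms ?i \<subseteq> cmp_vertices ms" using i by (auto simp: V_eq)
    have "(\<Sum>x\<in>part ms ?i. a x) = (\<Sum>x\<in>cmp_vertices ms. a x)"
      by (rule sum.mono_neutral_left[OF finite_V sub]) (use zo in auto)
    then have "a \<in> Fset ms ?i d" using zo s by (simp add: Fset_def)
    then show "a \<in> (\<Union>i<length ms. Fset ms i d)" using i by blast
  qed
  show "(\<Union>i<length ms. Fset ms i d) \<subseteq> {a \<in> monomials_deg (cmp_vertices ms) d. \<not> in_edge_ideal cmp_edge a}"
  proof
    fix a assume "a \<in> (\<Union>i<length ms. Fset ms i d)"
    then obtain i where i: "i < length ms" and a: "a \<in> Fset ms i d" by blast
    have sub: "part ms i \<subseteq> cmp_vertices ms" using i by (auto simp: V_eq)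
    have zo: "\<forall>y. y \<notin> part ms i \<longrightarrow> a y = 0" and s: "(\<Sum>x\<in>part ms i. a x) = d"
      using a by (auto simp: Fset_def)
    have "(\<Sum>x\<in>part ms i. a x) = (\<Sum>x\<in>cmp_vertices ms. a x)"
      by (rule sum.mono_neutral_left[OF finite_V sub]) (use zo in auto)
    moreover have "\<forall>x. x \<notin> cmp_vertices ms \<longrightarrow> a x = 0" using zo sub by blast
    moreover have "\<not> in_edge_ideal cmp_edge a"
    proof
      assume "in_edge_ideal cmp_edge a"
      then obtain u v where "fst u \<noteq> fst v" "a u \<ge> 1" "a v \<ge> 1"
        by (auto simp: in_edge_ideal_def cmp_edge_def)
      moreover have "u \<in> part ms i" "v \<in> part ms i" using zo calculation by (metis not_one_le_zero)+
      ultimately show False by (auto simp: part_def)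
    qed
    ultimately show "a \<in> {a \<in> monomials_deg (cmp_vertices ms) d. \<not> in_edge_ideal cmp_edge a}"
      using s by (simp add: monomials_deg_def)
  qed
qed

lemma F_disj:
  assumes "d > 0" "i \<noteq> j"
  shows "Fset ms i d \<inter> Fset ms j d = {}"
proof (rule ccontr)
  assume "\<not> ?thesis"
  then obtain a where a: "a \<in> Fset ms i d" "a \<in> Fset ms j d" by blast
  then have "(\<Sum>x\<in>part ms i. a x) = d" by (simp add: Fset_def)
  with assms have "\<exists>x\<in>part ms i. a x \<noteq> 0"
    by (metis less_numeral_extra(3) sum.neutral)
  then obtain x where x: "x \<in> part ms i" "a x \<noteq> 0" by blast
  then have "x \<notin> part ms j" using assms by (auto simp: part_def)
  then show False using a(2) x unfolding Fset_def by (cases x) force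
qed

lemma set_zero:
  "{a \<in> monomials_deg (cmp_vertices ms) 0. \<not> in_edge_ideal cmp_edge a} = {\<lambda>_. 0}"
proof -
  have "a = (\<lambda>_. 0)" if "a \<in> monomials_deg (cmp_vertices ms) 0" for a
  proof
    fix x
    show "a x = 0" using that finite_V[of ms] by (cases "x \<in> cmp_vertices ms"; cases x) (auto simp: monomials_deg_def)
  qed
  then show ?thesis by (auto simp: monomials_deg_def in_edge_ideal_def)
qed

lemma hf:
  "int (hilbert_fun (cmp_vertices ms) cmp_edge d) =
     (\<Sum>i<length ms. int ((ms!i + d - 1) choose d)) - (if d = 0 then int (length ms) - 1 else 0)"
proof (cases "d = 0")
  case True
  then show ?thesis by (simp add: hilbert_fun_def set_zero)
next
  case False
  then have "hilbert_fun (cmp_vertices ms) cmp_edge d = (\<Sum>i<length ms. card (Fset ms i d))"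
    unfolding hilbert_fun_def set_pos[OF \<open>d \<noteq> 0\<close>[unfolded neq0_conv]]
    by (intro card_UN_disjoint) (auto simp: finite_F F_disj)
  then show ?thesis using False by (simp add: card_F)
qed

lemma one_minus_X_mult: "(1 - fps_X) * (p::int fps) = p - fps_X * p"
  by (simp add: left_diff_distrib)

definition gf :: "nat \<Rightarrow> int fps" where
  "gf m = Abs_fps (\<lambda>d. int ((m + d - 1) choose d))"

lemma gf0: "gf 0 = 1"
proof (rule fps_ext)
  fix n show "fps_nth (gf 0) n = fps_nth 1 n" by (cases n) (simp_all add: gf_def)
qed

lemma gf_Suc: "gf (Suc m) * (1 - fps_X) = gf m"
proof (rule fps_ext)
  fix n
  have e: "gf (Suc m) * (1 - fps_X) = gf (Suc m) - fps_X * gf (Suc m)" by (metis one_minus_X_mult mult.commute)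
  show "fps_nth (gf (Suc m) * (1 - fps_X)) n = fps_nth (gf m) n"
  proof (cases n)
    case 0 then show ?thesis unfolding e by (simp add: gf_def)
  next
    case (Suc k)
    have l: "fps_nth (gf (Suc m) * (1 - fps_X)) n = int ((Suc m + Suc k - 1) choose Suc k) - int ((Suc m + k - 1) choose k)"
      unfolding e using Suc by (simp add: gf_def)
    have r: "fps_nth (gf m) n = int ((m + Suc k - 1) choose Suc k)"
      using Suc by (simp add: gf_def)
    have a1: "Suc m + Suc k - 1 = Suc (m + k)" "Suc m + k - 1 = m + k" "m + Suc k - 1 = m + k" by simp_all
    have "(Suc (m + k) choose Suc k) = (m + k choose k) + (m + k choose Suc k)" by (rule binomial_Suc_Suc)
    then show ?thesis unfolding l r a1 by simp
  qed
qed

lemma gf_pow: "gf m * (1 - fps_X) ^ m = 1"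
proof (induction m)
  case 0 then show ?case by (simp add: gf0)
next
  case (Suc m)
  have "gf (Suc m) * (1 - fps_X) ^ Suc m = (gf (Suc m) * (1 - fps_X)) * (1 - fps_X) ^ m"
    by (simp add: mult.assoc mult.commute)
  then show ?case using Suc by (simp add: gf_Suc)
qed

lemma pow_nth: "fps_nth ((1 - fps_X) ^ n :: int fps) j = (-1) ^ j * int (n choose j)"
proof (induction n arbitrary: j)
  case 0 then show ?case by simp
next
  case (Suc n)
  have "(1 - fps_X) ^ Suc n = (1 - fps_X) ^ n - fps_X * ((1 - fps_X) ^ n :: int fps)" unfolding power_Suc by (rule one_minus_X_mult)
  then show ?case using Suc by (cases j) (simp_all add: algebra_simps)
qed

lemma hs: "hilbert_series (cmp_vertices ms) cmp_edge =
   (\<Sum>i<length ms. gf (ms!i)) - fps_const (int (length ms) - 1)"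
proof (rule fps_ext)
  fix d
  have l: "fps_nth (hilbert_series (cmp_vertices ms) cmp_edge) d = int (hilbert_fun (cmp_vertices ms) cmp_edge d)"
    unfolding hilbert_series_def by (rule fps_nth_Abs_fps)
  have r: "fps_nth ((\<Sum>i<length ms. gf (ms!i)) - fps_const (int (length ms) - 1)) d
      = (\<Sum>i<length ms. int ((ms!i + d - 1) choose d)) - (if d = 0 then int (length ms) - 1 else 0)"
    unfolding fps_sub_nth fps_sum_nth fps_nth_fps_const gf_def fps_nth_Abs_fps by simp
  show "fps_nth (hilbert_series (cmp_vertices ms) cmp_edge) d = fps_nth ((\<Sum>i<length ms. gf (ms!i)) - fps_const (int (length ms) - 1)) d"
    unfolding l r by (rule hf)
qed

lemma indep:
  assumes "length ms \<ge> 1"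
  shows "independence_number (cmp_vertices ms) cmp_edge = Max (set ms)"
proof -
  let ?A = "card ` {S. independent_set (cmp_vertices ms) cmp_edge S}"
  have le: "c \<le> Max (set ms)" if "c \<in> ?A" for c
  proof -
    obtain S where S: "independent_set (cmp_vertices ms) cmp_edge S" "c = card S" using \<open>c \<in> ?A\<close> by blast
    have Sv: "S \<subseteq> cmp_vertices ms" and Sn: "\<forall>u\<in>S. \<forall>v\<in>S. \<not> cmp_edge u v"
      using S(1) unfolding independent_set_def by blast+
    show ?thesis
    proof (cases "S = {}")
      case True then show ?thesis using S by simp
    next
      case False
      then obtain x where x: "x \<in> S" by blast
      have sub: "S \<subseteq> part ms (fst x)"
      proof
        fix y assume y: "y \<in> S"
        then have e: "fst y = fst x" using x Sn unfolding cmp_edge_def by blast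
        have "y \<in> cmp_vertices ms" using y Sv by blast
        then have "snd y < ms ! fst y" unfolding cmp_vertices_def by (cases y) simp
        then have "snd y \<in> {..<ms ! fst x}" using e by simp
        then have "Pair (fst x) (snd y) \<in> part ms (fst x)" unfolding part_def by (rule imageI)
        then show "y \<in> part ms (fst x)" using e by (metis prod.collapse)
      qed
      have "x \<in> cmp_vertices ms" using x Sv by blast
      then have "fst x < length ms" unfolding cmp_vertices_def by (cases x) simp
      then have "ms ! fst x \<le> Max (set ms)" by (intro Max_ge finite_set nth_mem)
      moreover have "card S \<le> card (part ms (fst x))" by (rule card_mono[OF finite_part sub])
      ultimately show ?thesis using S(2) card_part[of ms "fst x"] by linarith
    qed
  qed
  have "Max (set ms) \<in> set ms" using assms by (intro Max_in) auto
  then obtain i where i: "i < length ms" "ms ! i = Max (set ms)" by (metis in_set_conv_nth)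
  have s1: "part ms i \<subseteq> cmp_vertices ms" unfolding V_eq using i(1) by blast
  have s2: "\<forall>u\<in>part ms i. \<forall>v\<in>part ms i. \<not> cmp_edge u v" unfolding part_def cmp_edge_def by auto
  have "independent_set (cmp_vertices ms) cmp_edge (part ms i)"
    unfolding independent_set_def using s1 s2 by blast
  then have "card (part ms i) \<in> ?A" by blast
  then have mem: "Max (set ms) \<in> ?A" using card_part[of ms i] i(2) by simp
  have "?A \<subseteq> {..Max (set ms)}" using le by blast
  then have fin: "finite ?A" using finite_subset by blast
  show ?thesis unfolding independence_number_def
    by (rule Max_eqI[OF fin le mem])
qed

lemma gf_mult_pow:
  assumes "m \<le> a"
  shows "gf m * (1 - fps_X) ^ a = (1 - fps_X) ^ (a - m)"
proof -
  have "(1 - fps_X :: int fps) ^ a = (1 - fps_X) ^ m * (1 - fps_X) ^ (a - m)"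
    using assms by (simp add: power_add[symmetric])
  then have "gf m * (1 - fps_X) ^ a = (gf m * (1 - fps_X) ^ m) * (1 - fps_X) ^ (a - m)"
    by (simp add: mult.assoc)
  then show ?thesis by (simp add: gf_pow)
qed

lemma h_nth:
  assumes "length ms \<ge> 1"
  shows "fps_nth (h_fps (cmp_vertices ms) cmp_edge) n =
     (\<Sum>i<length ms. (-1)^n * int ((Max (set ms) - ms!i) choose n))
     - (int (length ms) - 1) * ((-1)^n * int (Max (set ms) choose n))"
proof -
  let ?a = "Max (set ms)"
  have le: "ms ! i \<le> ?a" if "i < length ms" for i
    using that by (intro Max_ge finite_set nth_mem)
  have "h_fps (cmp_vertices ms) cmp_edge =
      ((\<Sum>i<length ms. gf (ms!i)) - fps_const (int (length ms) - 1)) * (1 - fps_X) ^ ?a"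
    unfolding h_fps_def hs indep[OF assms] ..
  also have "\<dots> = (\<Sum>i<length ms. gf (ms!i) * (1 - fps_X) ^ ?a) - fps_const (int (length ms) - 1) * (1 - fps_X) ^ ?a"
    by (simp add: left_diff_distrib sum_distrib_right)
  also have "(\<Sum>i<length ms. gf (ms!i) * (1 - fps_X) ^ ?a) = (\<Sum>i<length ms. (1 - fps_X) ^ (?a - ms!i))"
    by (rule sum.cong) (simp_all add: gf_mult_pow le)
  finally show ?thesis
    by (simp add: fps_sum_nth pow_nth)
qed

theorem corollary3p2:
  fixes ms :: "nat list"
  assumes "length ms \<ge> 1" and "\<forall>m\<in>set ms. m \<ge> 1"
  shows "pseudo_Gorenstein_star (cmp_vertices ms) cmp_edge \<longleftrightarrow>
           length ms = 2 \<and> odd (Max (set ms))"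
proof -
  let ?a = "Max (set ms)"
  let ?k = "length ms"
  let ?h = "h_fps (cmp_vertices ms) cmp_edge"
  let ?Z = "{n. fps_nth ?h n \<noteq> 0}"
  have le: "ms ! i \<le> ?a" if "i < length ms" for i
    using that by (intro Max_ge finite_set nth_mem)
  have ge1: "ms ! i \<ge> 1" if "i < length ms" for i
    using that assms(2) nth_mem by blast
  have a1: "?a \<ge> 1" using le ge1 assms(1) by (meson le_trans less_le_trans zero_less_one)
  have indn: "independence_number (cmp_vertices ms) cmp_edge = ?a" by (rule indep[OF assms(1)])
  have big: "fps_nth ?h n = 0" if "n > ?a" for n
  proof -
    have "?a - ms!i < n" for i using that by linarith
    then show ?thesis unfolding h_nth[OF assms(1)] using that by (simp add: binomial_eq_0)
  qed
  have top: "fps_nth ?h ?a = - (int ?k - 1) * (-1) ^ ?a"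
  proof -
    have "?a - ms!i < ?a" if "i < ?k" for i
      using that le ge1 a1 by (metis diff_less less_le_trans zero_less_one)
    then have "(\<Sum>i<?k. (-1)^?a * int ((?a - ms!i) choose ?a)) = 0"
      by (intro sum.neutral) (simp add: binomial_eq_0)
    then show ?thesis unfolding h_nth[OF assms(1)] by (simp add: algebra_simps)
  qed
  show ?thesis
  proof (cases "?k = 1")
    case True
    then obtain m where ms: "ms = [m]" by (metis One_nat_def length_0_conv length_Suc_conv)
    have am: "?a = m" using ms by simp
    have c: "fps_nth ?h n = (if n = 0 then 1 else 0)" for n
      unfolding h_nth[OF assms(1)] using ms by simp
    have Z: "?Z = {0}" using c by auto
    have "h_degree (cmp_vertices ms) cmp_edge = 0" unfolding h_degree_def Z by simp
    then have "a_invariant (cmp_vertices ms) cmp_edge \<noteq> 0"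
      unfolding a_invariant_def indn using a1 by simp
    then show ?thesis unfolding pseudo_Gorenstein_star_def using True by simp
  next
    case False
    then have k2: "?k \<ge> 2" using assms(1) by simp
    have ne: "fps_nth ?h ?a \<noteq> 0" unfolding top using k2 by simp
    have sub: "?Z \<subseteq> {..?a}" using big by (auto simp: not_le[symmetric])
    then have fin: "finite ?Z" using finite_subset by blast
    have deg: "h_degree (cmp_vertices ms) cmp_edge = ?a"
      unfolding h_degree_def by (rule Max_eqI[OF fin]) (use sub ne in auto)
    have ai: "a_invariant (cmp_vertices ms) cmp_edge = 0"
      unfolding a_invariant_def indn deg by simp
    have "pseudo_Gorenstein_star (cmp_vertices ms) cmp_edge \<longleftrightarrow> - (int ?k - 1) * (-1) ^ ?a = 1"
      unfolding pseudo_Gorenstein_star_def deg top[symmetric] using fin ne ai by auto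
    also have "\<dots> \<longleftrightarrow> ?k = 2 \<and> odd ?a"
    proof (cases "even ?a")
      case True then show ?thesis using k2 by auto
    next
      case False then show ?thesis using k2 by simp
    qed
    finally show ?thesis .
  qed
qed

end
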